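(* Let $G$ be a directed graph with real edge weights and no cycle of negative or zero weight. For any vertices $v,w$ such that $w$ is reachable from $v$, there exist two shortest paths from $v$ to $w$ in $G$ whose common vertices are all $(v,w)$-distance-critical vertices.
   Context: $\mathrm{dist}(x,y,H)$ denotes the shortest-path distance from $x$ to $y$ in graph $H$. A vertex $u$ is $(v,w)$-distance-critical if $u\in\{v,w\}$ or $\mathrm{dist}(v,w,G\setminus\{u\})>\mathrm{dist}(v,w,G)$. *)

theory Defs
  imports "HOL-Library.Extended_Real"
begin

definition is_walk :: "'a set \<Rightarrow> ('a \<times> 'a) set \<Rightarrow> 'a list \<Rightarrow> bool" where
  "is_walk V E xs \<longleftrightarrow> xs \<noteq> [] \<and> set xs \<subseteq> V \<and>
     (\<forall>i. Suc i < length xs \<longrightarrow> (xs ! i, xs ! Suc i) \<in> E)"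

definition walk_weight :: "('a \<times> 'a \<Rightarrow> real) \<Rightarrow> 'a list \<Rightarrow> real" where
  "walk_weight c xs = (\<Sum>i<length xs - 1. c (xs ! i, xs ! Suc i))"

definition is_path :: "'a set \<Rightarrow> ('a \<times> 'a) set \<Rightarrow> 'a \<Rightarrow> 'a \<Rightarrow> 'a list \<Rightarrow> bool" where
  "is_path V E v w xs \<longleftrightarrow> is_walk V E xs \<and> distinct xs \<and> hd xs = v \<and> last xs = w"

text \<open>Simple directed cycles: closed walk ys @ [hd ys] with ys nonempty and distinct
  (a self-loop is a cycle of length one).\<close>
definition is_cycle :: "'a set \<Rightarrow> ('a \<times> 'a) set \<Rightarrow> 'a list \<Rightarrow> bool" where
  "is_cycle V E xs \<longleftrightarrow> (\<exists>ys. ys \<noteq> [] \<and> distinct ys \<and> xs = ys @ [hd ys]) \<and> is_walk V E xs"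

definition reachable :: "'a set \<Rightarrow> ('a \<times> 'a) set \<Rightarrow> 'a \<Rightarrow> 'a \<Rightarrow> bool" where
  "reachable V E v w \<longleftrightarrow> (\<exists>xs. is_walk V E xs \<and> hd xs = v \<and> last xs = w)"

text \<open>Shortest-path distance dist(v,w,H), with value \<infinity> if w is unreachable from v.\<close>
definition dist :: "'a set \<Rightarrow> ('a \<times> 'a) set \<Rightarrow> ('a \<times> 'a \<Rightarrow> real) \<Rightarrow> 'a \<Rightarrow> 'a \<Rightarrow> ereal" where
  "dist V E c v w = (INF xs \<in> {xs. is_path V E v w xs}. ereal (walk_weight c xs))"

definition is_shortest_path ::
  "'a set \<Rightarrow> ('a \<times> 'a) set \<Rightarrow> ('a \<times> 'a \<Rightarrow> real) \<Rightarrow> 'a \<Rightarrow> 'a \<Rightarrow> 'a list \<Rightarrow> bool" where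
  "is_shortest_path V E c v w xs \<longleftrightarrow>
     is_path V E v w xs \<and> ereal (walk_weight c xs) = dist V E c v w"

text \<open>G \ {u} has vertex set V - {u}; edges at u become unusable since walks must stay in the vertex set.\<close>
definition distance_critical ::
  "'a set \<Rightarrow> ('a \<times> 'a) set \<Rightarrow> ('a \<times> 'a \<Rightarrow> real) \<Rightarrow> 'a \<Rightarrow> 'a \<Rightarrow> 'a \<Rightarrow> bool" where
  "distance_critical V E c v w u \<longleftrightarrow>
     u \<in> {v, w} \<or> dist (V - {u}) E c v w > dist V E c v w"

end

theory Submission
  imports Defs
begin

fun wlk :: "('a \<times> 'a) set \<Rightarrow> 'a list \<Rightarrow> bool" where
  "wlk E [] = True"
| "wlk E [x] = True"
| "wlk E (x # y # xs) = ((x, y) \<in> E \<and> wlk E (y # xs))"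

fun ww :: "('a \<times> 'a \<Rightarrow> real) \<Rightarrow> 'a list \<Rightarrow> real" where
  "ww c (x # y # xs) = c (x, y) + ww c (y # xs)"
| "ww c _ = 0"

lemma wlk_iff: "wlk E xs \<longleftrightarrow> (\<forall>i. Suc i < length xs \<longrightarrow> (xs ! i, xs ! Suc i) \<in> E)"
proof (induction E xs rule: wlk.induct)
  case (3 E x y xs)
  show ?case
  proof
    assume "wlk E (x # y # xs)"
    then show "\<forall>i. Suc i < length (x # y # xs) \<longrightarrow> ((x # y # xs) ! i, (x # y # xs) ! Suc i) \<in> E"
      using 3 by (auto simp: nth_Cons split: nat.splits)
  next
    assume h: "\<forall>i. Suc i < length (x # y # xs) \<longrightarrow> ((x # y # xs) ! i, (x # y # xs) ! Suc i) \<in> E"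
    have "(x,y) \<in> E" using h[rule_format, of 0] by simp
    moreover have "\<forall>i. Suc i < length (y # xs) \<longrightarrow> ((y # xs) ! i, (y # xs) ! Suc i) \<in> E"
      using h by (metis Suc_less_eq length_Cons nth_Cons_Suc)
    ultimately show "wlk E (x # y # xs)" using 3 by simp
  qed
qed auto

lemma is_walk_iff: "is_walk V E xs \<longleftrightarrow> xs \<noteq> [] \<and> set xs \<subseteq> V \<and> wlk E xs"
  unfolding is_walk_def wlk_iff by simp

lemma ww_eq: "walk_weight c xs = ww c xs"
proof (induction c xs rule: ww.induct)
  case (1 c x y xs)
  have "walk_weight c (x # y # xs) = (\<Sum>i<Suc (length xs). c ((x#y#xs) ! i, (x#y#xs) ! Suc i))"
    unfolding walk_weight_def by simp
  also have "\<dots> = c (x,y) + (\<Sum>i<length xs. c ((y#xs) ! i, (y#xs) ! Suc i))"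
    by (subst sum.lessThan_Suc_shift) simp
  also have "\<dots> = c (x,y) + walk_weight c (y#xs)" unfolding walk_weight_def by simp
  finally show ?case using 1 by simp
qed (auto simp: walk_weight_def)

lemma wlk_append: "wlk E (xs @ y # ys) \<longleftrightarrow> wlk E (xs @ [y]) \<and> wlk E (y # ys)"
proof (induction xs)
  case (Cons a xs)
  then show ?case by (cases xs) auto
qed simp

lemma ww_append: "ww c (xs @ y # ys) = ww c (xs @ [y]) + ww c (y # ys)"
proof (induction xs)
  case (Cons a xs)
  then show ?case by (cases xs) auto
qed simp

lemma wlk_split3: "wlk E (as @ z # ms @ z # cs) \<Longrightarrow>
   wlk E (as @ [z]) \<and> wlk E (z # ms @ [z]) \<and> wlk E (z # cs) \<and> wlk E (as @ z # cs)"
proof -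
  assume h: "wlk E (as @ z # ms @ z # cs)"
  then have 1: "wlk E (as @ [z])" and 2: "wlk E ((z # ms) @ z # cs)"
    using wlk_append[of E as z "ms @ z # cs"] by auto
  from 2 have 3: "wlk E (z # ms @ [z])" and 4: "wlk E (z # cs)"
    using wlk_append[of E "z # ms" z cs] by auto
  show ?thesis using 1 3 4 wlk_append[of E as z cs] by auto
qed

lemma ww_split3: "ww c (as @ z # ms @ z # cs) = ww c (as @ z # cs) + ww c (z # ms @ [z])"
  using ww_append[of c as z "ms @ z # cs"] ww_append[of c "z # ms" z cs] ww_append[of c as z cs]
  by simp

lemma wlk_app2: "wlk E xs \<Longrightarrow> wlk E ys \<Longrightarrow> xs \<noteq> [] \<Longrightarrow> ys \<noteq> [] \<Longrightarrow>
   (last xs, hd ys) \<in> E \<Longrightarrow> wlk E (xs @ ys)"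
proof (induction xs rule: wlk.induct)
  case (2 E x)
  then show ?case by (cases ys) auto
qed auto

lemma wlk_mono: "wlk F xs \<Longrightarrow> F \<subseteq> E \<Longrightarrow> wlk E xs"
  by (induction F xs rule: wlk.induct) auto

lemma is_walk_take: "is_walk V E P \<Longrightarrow> i < length P \<Longrightarrow> is_walk V E (take (Suc i) P)"
  unfolding is_walk_def by (auto dest: in_set_takeD)

lemma is_walk_drop: "is_walk V E P \<Longrightarrow> i < length P \<Longrightarrow> is_walk V E (drop i P)"
  unfolding is_walk_def by (auto dest: in_set_dropD simp: add.commute)

lemma hd_take_Suc: "P \<noteq> [] \<Longrightarrow> hd (take (Suc i) P) = hd P"
  by (cases P) auto

lemma last_take_Suc: "i < length P \<Longrightarrow> last (take (Suc i) P) = P ! i"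
  by (simp add: take_Suc_conv_app_nth)

lemma distinct_hd_last: "distinct xs \<Longrightarrow> xs \<noteq> [] \<Longrightarrow> hd xs = last xs \<Longrightarrow> xs = [hd xs]"
proof (cases xs)
  case (Cons a ys)
  assume "distinct xs" "hd xs = last xs"
  then show ?thesis using Cons by (cases ys) (auto split: if_splits)
qed simp

lemma fin_distinct_lists: "finite V \<Longrightarrow> finite {xs. set xs \<subseteq> V \<and> distinct xs \<and> Q xs}"
proof -
  assume f: "finite V"
  have "{xs. set xs \<subseteq> V \<and> distinct xs \<and> Q xs} \<subseteq> {xs. set xs \<subseteq> V \<and> length xs \<le> card V}"
    using f by (auto simp: distinct_card[symmetric] intro: card_mono)
  then show ?thesis using finite_lists_length_le[OF f] finite_subset by blast
qed

locale pg =
  fixes V :: "'a set" and E :: "('a \<times> 'a) set" and c :: "'a \<times> 'a \<Rightarrow> real"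
  assumes finV: "finite V" and EV: "E \<subseteq> V \<times> V"
    and pos: "\<And>C. is_cycle V E C \<Longrightarrow> walk_weight c C > 0"
begin

lemma closed_pos: "is_walk V E (y # bs @ [y]) \<Longrightarrow> ww c (y # bs @ [y]) > 0"
proof (induction "length bs" arbitrary: y bs rule: less_induct)
  case less
  show ?case
  proof (cases "distinct (y#bs)")
    case True
    then have "is_cycle V E (y#bs@[y])" unfolding is_cycle_def using less.prems
      by (intro conjI exI[of _ "y#bs"]) auto
    then show ?thesis using pos ww_eq by metis
  next
    case False
    then obtain as z ms cs where dec: "y#bs = as@[z]@ms@[z]@cs" using not_distinct_decomp by blast
    have eq: "y#bs@[y] = as @ z # ms @ z # (cs @ [y])" using dec by simp
    have w: "wlk E (y#bs@[y])" and sV: "set (y#bs@[y]) \<subseteq> V" using less.prems by (auto simp: is_walk_iff)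
    have ws: "wlk E (z # ms @ [z])" "wlk E (as @ z # cs @ [y])"
      using wlk_split3[of E as z ms "cs @ [y]"] w eq by auto
    have wt: "ww c (y#bs@[y]) = ww c (as @ z # cs @ [y]) + ww c (z # ms @ [z])"
      using ww_split3[of c as z ms "cs @ [y]"] eq by metis
    have inner: "ww c (z # ms @ [z]) > 0"
      apply (rule less.hyps)
      using arg_cong[OF dec, of length] apply simp
      using ws(1) sV eq unfolding is_walk_iff by auto
    have outer: "ww c (as @ z # cs @ [y]) > 0"
    proof (cases as)
      case Nil
      then have "z = y" "bs = ms @ z # cs" using dec by auto
      then show ?thesis using less.hyps[of cs y] ws(2) sV eq Nil unfolding is_walk_iff by auto
    next
      case (Cons a as')
      then have "a = y" "bs = as' @ z # ms @ z # cs" using dec by auto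
      then show ?thesis using less.hyps[of "as' @ z # cs" y] ws(2) sV eq Cons unfolding is_walk_iff by auto
    qed
    show ?thesis using inner outer wt by simp
  qed
qed

lemma shorten: "is_walk V E xs \<Longrightarrow> \<exists>ys. is_walk V E ys \<and> distinct ys \<and> hd ys = hd xs \<and>
   last ys = last xs \<and> set ys \<subseteq> set xs \<and> ww c ys \<le> ww c xs"
proof (induction "length xs" arbitrary: xs rule: less_induct)
  case less
  show ?case
  proof (cases "distinct xs")
    case True
    then show ?thesis using less.prems by blast
  next
    case False
    then obtain as y bs cs where dec: "xs = as @ y # bs @ y # cs" using not_distinct_decomp by fastforce
    have w: "wlk E xs" and sV: "set xs \<subseteq> V" using less.prems by (auto simp: is_walk_iff)
    have ws: "wlk E (y # bs @ [y])" "wlk E (as @ y # cs)"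
      using wlk_split3[of E as y bs cs] w dec by auto
    have cp: "ww c (y # bs @ [y]) > 0" using ws(1) sV dec by (intro closed_pos) (auto simp: is_walk_iff)
    have wt: "ww c xs = ww c (as @ y # cs) + ww c (y # bs @ [y])"
      using ww_split3 dec by simp
    have "is_walk V E (as @ y # cs)" using ws(2) sV dec by (auto simp: is_walk_iff)
    then obtain ys where ys: "is_walk V E ys \<and> distinct ys \<and> hd ys = hd (as @ y # cs) \<and>
      last ys = last (as @ y # cs) \<and> set ys \<subseteq> set (as @ y # cs) \<and> ww c ys \<le> ww c (as @ y # cs)"
      using less.hyps[of "as @ y # cs"] dec by auto
    have "hd (as @ y # cs) = hd xs" using dec by (cases as) auto
    moreover have "last (as @ y # cs) = last xs" using dec by (cases cs) auto
    moreover have "set (as @ y # cs) \<subseteq> set xs" using dec by auto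
    ultimately show ?thesis using ys wt cp by (intro exI[of _ ys]) auto
  qed
qed

lemma fin_paths: "finite {xs. is_path V E a b xs}"
  using fin_distinct_lists[OF finV, of "\<lambda>xs. is_walk V E xs \<and> hd xs = a \<and> last xs = b"]
  by (rule finite_subset[rotated]) (auto simp: is_path_def is_walk_def)

lemma reach_min: assumes "reachable V E a b"
  shows "\<exists>P. is_path V E a b P \<and> (\<forall>Q. is_path V E a b Q \<longrightarrow> ww c P \<le> ww c Q) \<and>
      dist V E c a b = ereal (ww c P)"
proof -
  let ?S = "{xs. is_path V E a b xs}"
  obtain xs where xs: "is_walk V E xs" "hd xs = a" "last xs = b" using assms unfolding reachable_def by blast
  then obtain ys where "is_path V E a b ys" using shorten unfolding is_path_def by metis
  then have ne: "?S \<noteq> {}" by blast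
  define M where "M = Min (ww c ` ?S)"
  have "M \<in> ww c ` ?S" unfolding M_def using ne fin_paths by (intro Min_in) auto
  then obtain P where P: "P \<in> ?S" "ww c P = M" by blast
  have le: "\<forall>Q. is_path V E a b Q \<longrightarrow> ww c P \<le> ww c Q"
    using P fin_paths unfolding M_def by (auto intro: Min_le)
  have "dist V E c a b = ereal (ww c P)"
    unfolding dist_def ww_eq
  proof (rule antisym)
    show "(INF xs\<in>?S. ereal (ww c xs)) \<le> ereal (ww c P)" using P(1) by (rule INF_lower)
    show "ereal (ww c P) \<le> (INF xs\<in>?S. ereal (ww c xs))" using le by (auto intro: INF_greatest)
  qed
  then show ?thesis using P le by blast
qed

lemma walk_ge: assumes "is_walk V E xs"
  shows "dist V E c (hd xs) (last xs) \<le> ereal (ww c xs)"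
proof -
  obtain ys where ys: "is_walk V E ys \<and> distinct ys \<and> hd ys = hd xs \<and>
   last ys = last xs \<and> ww c ys \<le> ww c xs" using shorten[OF assms] by blast
  then have "is_path V E (hd xs) (last xs) ys" unfolding is_path_def by blast
  then have "dist V E c (hd xs) (last xs) \<le> ereal (ww c ys)"
    unfolding dist_def ww_eq[symmetric] by (rule INF_lower[OF CollectI])
  then show ?thesis using ys by (meson ereal_less_eq(3) order_trans)
qed

end

locale pgv = pg +
  fixes v :: 'a
  assumes vV: "v \<in> V"
begin

definition dd :: "'a \<Rightarrow> real" where "dd y = real_of_ereal (dist V E c v y)"

definition Fe :: "('a \<times> 'a) set" where
  "Fe = {(x,y). (x,y) \<in> E \<and> reachable V E v x \<and> dd y = dd x + c (x,y)}"

lemma Fe_sub: "Fe \<subseteq> E" unfolding Fe_def by auto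

lemma dd_min: assumes "reachable V E v y"
  shows "\<exists>P. is_path V E v y P \<and> ww c P = dd y \<and> dist V E c v y = ereal (dd y)"
  using reach_min[OF assms] unfolding dd_def by auto

lemma walk_ge_dd: assumes "is_walk V E xs" "hd xs = v"
  shows "dd (last xs) \<le> ww c xs" "dist V E c v (last xs) = ereal (dd (last xs))"
proof -
  have r: "reachable V E v (last xs)" using assms unfolding reachable_def by blast
  show "dist V E c v (last xs) = ereal (dd (last xs))" using dd_min[OF r] by blast
  then show "dd (last xs) \<le> ww c xs" using walk_ge[OF assms(1)] assms(2) by simp
qed

lemma dd_v: "dd v = 0"
proof -
  have "reachable V E v v" unfolding reachable_def using vV
    by (intro exI[of _ "[v]"]) (auto simp: is_walk_def)
  then obtain P where P: "is_path V E v v P" "ww c P = dd v" using dd_min by blast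
  have "distinct P" "P \<noteq> []" "hd P = v" "last P = v" using P(1) unfolding is_path_def is_walk_def by auto
  then have "P = [v]" by (metis distinct_hd_last)
  then show ?thesis using P by simp
qed

lemma telescope: "wlk Fe xs \<Longrightarrow> xs \<noteq> [] \<Longrightarrow> ww c xs = dd (last xs) - dd (hd xs)"
proof (induction xs)
  case (Cons a xs)
  then show ?case
  proof (cases xs)
    case (Cons b ys)
    have "(a,b) \<in> Fe" "wlk Fe xs" using Cons.prems Cons by auto
    then have "dd b = dd a + c (a,b)" "ww c xs = dd (last xs) - dd b" using Cons.IH Cons unfolding Fe_def by auto
    then show ?thesis using Cons by simp
  qed simp
qed simp

lemma Fwalk_distinct: assumes "is_walk V Fe xs" shows "distinct xs"
proof (rule ccontr)
  assume "\<not> distinct xs"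
  then obtain as y bs cs where dec: "xs = as @ y # bs @ y # cs" using not_distinct_decomp by fastforce
  have w: "wlk Fe xs" and sV: "set xs \<subseteq> V" using assms by (auto simp: is_walk_iff)
  have ws: "wlk Fe (y # bs @ [y])" using wlk_split3[of Fe as y bs cs] w dec by auto
  then have "ww c (y # bs @ [y]) > 0" using sV dec wlk_mono[OF ws Fe_sub]
    by (intro closed_pos) (auto simp: is_walk_iff)
  moreover have "ww c (y # bs @ [y]) = 0" using telescope[OF ws] by simp
  ultimately show False by simp
qed

lemma prefix_dd: assumes P: "is_path V E v w xs" "ww c xs = dd w" and j: "j < length xs"
  shows "ww c (take (Suc j) xs) = dd (xs ! j)"
proof -
  have wk: "is_walk V E xs" "hd xs = v" "last xs = w" using P unfolding is_path_def by auto
  have ne: "xs \<noteq> []" using wk unfolding is_walk_def by auto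
  have split: "xs = take j xs @ xs ! j # drop (Suc j) xs" using j by (rule id_take_nth_drop)
  have tk: "take (Suc j) xs = take j xs @ [xs ! j]" using j by (simp add: take_Suc_conv_app_nth)
  have wsum: "ww c xs = ww c (take (Suc j) xs) + ww c (xs ! j # drop (Suc j) xs)"
    using ww_append[of c "take j xs" "xs ! j" "drop (Suc j) xs"] by (simp only: split[symmetric] tk[symmetric])
  have pre: "is_walk V E (take (Suc j) xs)" using is_walk_take[OF wk(1) j] .
  have hpre: "hd (take (Suc j) xs) = v" using hd_take_Suc[OF ne] wk by simp
  have lpre: "last (take (Suc j) xs) = xs ! j" using last_take_Suc[OF j] .
  have ge: "dd (xs ! j) \<le> ww c (take (Suc j) xs)" using walk_ge_dd[OF pre hpre] lpre by simp
  have r: "reachable V E v (xs ! j)" unfolding reachable_def using pre hpre lpre by blast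
  obtain S where S: "is_path V E v (xs ! j) S" "ww c S = dd (xs ! j)" using dd_min[OF r] by blast
  have Sne: "S \<noteq> []" and Sl: "last S = xs ! j" and Sh: "hd S = v" and Sw: "is_walk V E S"
    using S unfolding is_path_def is_walk_def by auto
  have Seq: "butlast S @ [xs ! j] = S" using Sne Sl by (metis append_butlast_last_id)
  have suf: "is_walk V E (xs ! j # drop (Suc j) xs)"
    using is_walk_drop[OF wk(1) j] j by (simp add: Cons_nth_drop_Suc)
  define W where "W = butlast S @ xs ! j # drop (Suc j) xs"
  have "wlk E S" using Sw by (simp add: is_walk_iff)
  then have "wlk E (butlast S @ [xs ! j])" by (simp only: Seq)
  moreover have "wlk E (xs ! j # drop (Suc j) xs)" using suf by (simp add: is_walk_iff)
  ultimately have "wlk E W" unfolding W_def using wlk_append[of E "butlast S" "xs ! j" "drop (Suc j) xs"] by simp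
  moreover have "set W \<subseteq> V" using Sw suf unfolding W_def
    by (auto simp: is_walk_iff dest: in_set_butlastD)
  ultimately have Ww: "is_walk V E W" unfolding W_def is_walk_iff by simp
  have "hd W = hd (butlast S @ [xs ! j])" unfolding W_def by (cases "butlast S") auto
  also have "\<dots> = hd S" by (simp only: Seq)
  finally have Wh: "hd W = v" using Sh by simp
  have "last W = last (xs ! j # drop (Suc j) xs)" unfolding W_def by simp
  also have "\<dots> = last xs" using j by (simp add: Cons_nth_drop_Suc)
  finally have Wl: "last W = w" using wk by simp
  have "ww c W = ww c S + ww c (xs ! j # drop (Suc j) xs)"
    unfolding W_def using ww_append[of c "butlast S" "xs ! j" "drop (Suc j) xs"] by (simp only: Seq)
  moreover have "dd w \<le> ww c W" using walk_ge_dd[OF Ww Wh] Wl by simp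
  ultimately show ?thesis using ge S(2) wsum P(2) by linarith
qed

lemma shortest_tight: assumes P: "is_path V E v w xs" "ww c xs = dd w"
  shows "is_walk V Fe xs"
proof -
  have wk: "is_walk V E xs" "hd xs = v" using P unfolding is_path_def by auto
  have ne: "xs \<noteq> []" using wk unfolding is_walk_def by auto
  have "(xs ! i, xs ! Suc i) \<in> Fe" if i: "Suc i < length xs" for i
  proof -
    have e: "(xs ! i, xs ! Suc i) \<in> E" using wk i unfolding is_walk_def by auto
    have pre: "is_walk V E (take (Suc i) xs)" using is_walk_take[OF wk(1)] i by simp
    have r: "reachable V E v (xs ! i)" unfolding reachable_def
      using pre hd_take_Suc[OF ne] wk last_take_Suc[of i xs] i by (intro exI[of _ "take (Suc i) xs"]) auto
    have tk: "take (Suc (Suc i)) xs = take i xs @ xs ! i # [xs ! Suc i]"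
      using i by (simp add: take_Suc_conv_app_nth)
    have tk1: "take (Suc i) xs = take i xs @ [xs ! i]"
      using i by (simp add: take_Suc_conv_app_nth)
    have "ww c (take (Suc (Suc i)) xs) = ww c (take (Suc i) xs) + c (xs ! i, xs ! Suc i)"
      using ww_append[of c "take i xs" "xs ! i" "[xs ! Suc i]"] tk tk1 by simp
    then have "dd (xs ! Suc i) = dd (xs ! i) + c (xs ! i, xs ! Suc i)"
      using prefix_dd[OF P, of i] prefix_dd[OF P, of "Suc i"] i by simp
    then show ?thesis using e r unfolding Fe_def by simp
  qed
  then show ?thesis using wk unfolding is_walk_def by auto
qed

end



locale dagw =
  fixes V :: "'a set" and F :: "('a \<times> 'a) set" and v :: 'a
  assumes finV: "finite V" and FV: "F \<subseteq> V \<times> V" and dist_walk: "\<And>xs. is_walk V F xs \<Longrightarrow> distinct xs"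
begin

definition "Wk y = {xs. is_walk V F xs \<and> hd xs = v \<and> last xs = y}"
definition "Rr y \<longleftrightarrow> Wk y \<noteq> {}"
definition "Kk y = {z. \<forall>xs \<in> Wk y. z \<in> set xs}"
definition "ord y = Max (length ` Wk y)"
definition "Pr b = {q. Rr q \<and> (q, b) \<in> F}"

lemma fin_Wk: "finite (Wk y)"
  using fin_distinct_lists[OF finV, of "\<lambda>xs. is_walk V F xs \<and> hd xs = v \<and> last xs = y"]
  by (rule finite_subset[rotated]) (auto simp: Wk_def is_walk_def dist_walk)

lemma ord_ge: "xs \<in> Wk y \<Longrightarrow> length xs \<le> ord y"
  unfolding ord_def using fin_Wk by (auto intro: Max_ge)

lemma ord_ex: assumes "Rr y" shows "\<exists>xs \<in> Wk y. length xs = ord y"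
proof -
  have "Max (length ` Wk y) \<in> length ` Wk y" using fin_Wk assms unfolding Rr_def by (intro Max_in) auto
  then show ?thesis unfolding ord_def by auto
qed

lemma K_self: "y \<in> Kk y"
  unfolding Kk_def Wk_def by (auto simp: is_walk_def)

lemma Wk_take: "P \<in> Wk y \<Longrightarrow> i < length P \<Longrightarrow> take (Suc i) P \<in> Wk (P ! i)"
  unfolding Wk_def using is_walk_take hd_take_Suc last_take_Suc by (fastforce simp: is_walk_def)

lemma Wk_in: "P \<in> Wk y \<Longrightarrow> z \<in> set P \<Longrightarrow> Rr z"
  unfolding Rr_def by (metis Wk_take empty_iff in_set_conv_nth)

lemma Wk_app: assumes "W \<in> Wk z" "P \<in> Wk y" "z = P ! i" "Suc i < length P"
  shows "W @ drop (Suc i) P \<in> Wk y"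
proof -
  have W: "is_walk V F W" "hd W = v" "last W = z" and P: "is_walk V F P" "hd P = v" "last P = y"
    using assms unfolding Wk_def by auto
  have d: "is_walk V F (drop (Suc i) P)" using is_walk_drop[OF P(1)] assms(4) by simp
  have hd: "hd (drop (Suc i) P) = P ! Suc i" using assms(4) by (simp add: hd_drop_conv_nth)
  have e: "(P ! i, P ! Suc i) \<in> F" using P(1) assms(4) unfolding is_walk_def by auto
  have "wlk F (W @ drop (Suc i) P)"
    using W d hd e assms(3) by (intro wlk_app2) (auto simp: is_walk_iff)
  moreover have "set (W @ drop (Suc i) P) \<subseteq> V" using W d by (auto simp: is_walk_iff)
  moreover have "hd (W @ drop (Suc i) P) = v" using W by (auto simp: is_walk_def)
  moreover have "last (W @ drop (Suc i) P) = y"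
  proof -
    have "drop (Suc i) P \<noteq> []" using assms(4) by simp
    then show ?thesis using P assms(4) by (simp add: last_drop)
  qed
  ultimately show ?thesis using W(1) unfolding Wk_def by (auto simp: is_walk_iff)
qed

lemma ord_lt: assumes P: "P \<in> Wk y" and z: "z \<in> set P" "z \<noteq> y" shows "ord z < ord y"
proof -
  obtain i where i: "i < length P" "z = P ! i" using z by (auto simp: in_set_conv_nth)
  have "last P = y" "P \<noteq> []" using P unfolding Wk_def is_walk_def by auto
  then have si: "Suc i < length P" using i z by (metis Suc_lessI last_conv_nth diff_Suc_1)
  obtain W where W: "W \<in> Wk z" "length W = ord z" using ord_ex Wk_in[OF P z(1)] by blast
  have "W @ drop (Suc i) P \<in> Wk y" using Wk_app[OF W(1) P i(2) si] .
  then have "length (W @ drop (Suc i) P) \<le> ord y" by (rule ord_ge)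
  then show ?thesis using W si by simp
qed

lemma K_R: "Rr y \<Longrightarrow> z \<in> Kk y \<Longrightarrow> Rr z \<and> (z \<noteq> y \<longrightarrow> ord z < ord y)"
  unfolding Rr_def Kk_def using Wk_in ord_lt unfolding Rr_def by blast

lemma K_trans: assumes "z \<in> Kk y" "t \<in> Kk z" shows "t \<in> Kk y"
proof (unfold Kk_def, intro CollectI ballI)
  fix P assume P: "P \<in> Wk y"
  then obtain i where i: "i < length P" "z = P ! i" using assms(1) unfolding Kk_def by (auto simp: in_set_conv_nth)
  have "take (Suc i) P \<in> Wk z" using Wk_take[OF P i(1)] i by simp
  then have "t \<in> set (take (Suc i) P)" using assms(2) unfolding Kk_def by auto
  then show "t \<in> set P" by (rule in_set_takeD)
qed

lemma K_total_aux: assumes P: "P \<in> Wk y" and y: "Rr y" and z: "z1 \<in> Kk y" "z2 \<in> Kk y"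
  and ij: "i \<le> j" "j < length P" "z1 = P ! i" "z2 = P ! j"
  shows "z1 \<in> Kk z2"
proof (unfold Kk_def, intro CollectI ballI)
  fix R assume R: "R \<in> Wk z2"
  have dP: "distinct P" using P dist_walk unfolding Wk_def by auto
  show "z1 \<in> set R"
  proof (cases "Suc j < length P")
    case True
    have "R @ drop (Suc j) P \<in> Wk y" using Wk_app[OF R P ij(4) True] .
    then have "z1 \<in> set (R @ drop (Suc j) P)" using z(1) unfolding Kk_def by auto
    moreover have "z1 \<notin> set (drop (Suc j) P)"
    proof
      assume "z1 \<in> set (drop (Suc j) P)"
      then obtain k where "k < length (drop (Suc j) P)" "drop (Suc j) P ! k = z1" by (auto simp: in_set_conv_nth)
      then have "P ! (Suc j + k) = P ! i" "Suc j + k < length P" using ij by auto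
      moreover have "i < length P" using ij by simp
      ultimately show False using nth_eq_iff_index_eq[OF dP, of "Suc j + k" i] ij by simp
    qed
    ultimately show ?thesis by auto
  next
    case False
    then have "j = length P - 1" using ij by simp
    moreover have "P \<noteq> []" "last P = y" using P unfolding Wk_def is_walk_def by auto
    ultimately have "z2 = y" using ij by (simp add: last_conv_nth)
    then show ?thesis using R z(1) unfolding Kk_def by auto
  qed
qed

lemma K_total: assumes y: "Rr y" and z: "z1 \<in> Kk y" "z2 \<in> Kk y"
  shows "z1 \<in> Kk z2 \<or> z2 \<in> Kk z1"
proof -
  obtain P where P: "P \<in> Wk y" using y unfolding Rr_def by auto
  have "z1 \<in> set P" "z2 \<in> set P" using z P unfolding Kk_def by auto
  then obtain i j where "i < length P" "z1 = P ! i" "j < length P" "z2 = P ! j"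
    by (metis in_set_conv_nth)
  then show ?thesis using K_total_aux[OF P y z] K_total_aux[OF P y z(2,1)] by (cases "i \<le> j") auto
qed

lemma pred_walk: assumes P: "P \<in> Wk b" and b: "b \<noteq> v"
  shows "butlast P \<in> Wk (last (butlast P)) \<and> last (butlast P) \<in> Pr b \<and> set (butlast P) \<subseteq> set P"
proof -
  have Pw: "is_walk V F P" "hd P = v" "last P = b" using P unfolding Wk_def by auto
  have ne: "P \<noteq> []" using Pw unfolding is_walk_def by auto
  have l2: "length P \<ge> 2"
  proof (rule ccontr)
    assume "\<not> length P \<ge> 2"
    then have "length P = 1" using ne by (cases P) (auto simp: not_le)
    then have "hd P = last P" by (cases P) auto
    then show False using Pw b by simp
  qed
  define n where "n = length P - 2"
  have n: "Suc n < length P" "butlast P = take (Suc n) P" using l2 unfolding n_def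
    by (auto simp: butlast_conv_take Suc_diff_Suc numeral_2_eq_2)
  have t: "take (Suc n) P \<in> Wk (P ! n)" using Wk_take[OF P] n by simp
  have lb: "last (butlast P) = P ! n" using n last_take_Suc[of n P] by simp
  have e: "(P ! n, P ! Suc n) \<in> F" using Pw(1) n unfolding is_walk_def by auto
  have "P ! Suc n = b" using Pw ne n l2 unfolding n_def by (simp add: last_conv_nth numeral_2_eq_2 Suc_diff_Suc)
  then have "last (butlast P) \<in> Pr b" using t e lb unfolding Pr_def Rr_def by auto
  then show ?thesis using t n lb by (auto dest: in_set_takeD)
qed

lemma pred_ex: "Rr b \<Longrightarrow> b \<noteq> v \<Longrightarrow> Pr b \<noteq> {}"
  using pred_walk unfolding Rr_def by blast

lemma K_pred: assumes b: "b \<noteq> v" and z: "\<forall>q \<in> Pr b. z \<in> Kk q" shows "z \<in> Kk b"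
proof (unfold Kk_def, intro CollectI ballI)
  fix P assume P: "P \<in> Wk b"
  note pw = pred_walk[OF P b]
  then have "z \<in> set (butlast P)" using z unfolding Kk_def by blast
  then show "z \<in> set P" using pw by blast
qed

lemma Wk_snoc: assumes "Q \<in> Wk p" "(p, b) \<in> F" shows "Q @ [b] \<in> Wk b"
proof -
  have Q: "is_walk V F Q" "hd Q = v" "last Q = p" using assms unfolding Wk_def by auto
  have bV: "b \<in> V" using assms(2) FV by auto
  have "wlk F (Q @ [b])" using Q assms(2) by (intro wlk_app2) (auto simp: is_walk_iff)
  then show ?thesis using Q bV unfolding Wk_def by (auto simp: is_walk_iff)
qed

lemma pred_ord: assumes "p \<in> Pr b" shows "Rr b \<and> ord p < ord b"
proof -
  have p: "Rr p" "(p, b) \<in> F" using assms unfolding Pr_def by auto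
  obtain W where W: "W \<in> Wk p" "length W = ord p" using ord_ex[OF p(1)] by blast
  have "W @ [b] \<in> Wk b" using Wk_snoc[OF W(1) p(2)] .
  then show ?thesis using ord_ge[of "W @ [b]" b] W unfolding Rr_def by auto
qed

lemma choice: assumes a: "Rr a" and ne: "Pr b \<noteq> {}"
  shows "\<exists>p\<in>Pr b. Kk a \<inter> Kk p \<subseteq> {z. \<forall>q\<in>Pr b. z \<in> Kk q}"
proof (cases "Kk a \<subseteq> {z. \<forall>q\<in>Pr b. z \<in> Kk q}")
  case True then show ?thesis using ne by blast
next
  case False
  let ?Z = "Kk a - {z. \<forall>q\<in>Pr b. z \<in> Kk q}"
  obtain z1 where "z1 \<in> ?Z" using False by blast
  then obtain z0 where z0: "z0 \<in> ?Z" "\<forall>z. z \<in> ?Z \<longrightarrow> ord z0 \<le> ord z"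
    using ex_has_least_nat[of "\<lambda>z. z \<in> ?Z" z1 ord] by blast
  then obtain p where p: "p \<in> Pr b" "z0 \<notin> Kk p" by blast
  have "Kk a \<inter> Kk p \<subseteq> {z. \<forall>q\<in>Pr b. z \<in> Kk q}"
  proof
    fix z assume z: "z \<in> Kk a \<inter> Kk p"
    show "z \<in> {z. \<forall>q\<in>Pr b. z \<in> Kk q}"
    proof (rule ccontr)
      assume "z \<notin> {z. \<forall>q\<in>Pr b. z \<in> Kk q}"
      then have zZ: "z \<in> ?Z" using z by blast
      have "z0 \<in> Kk z \<or> z \<in> Kk z0" using K_total[OF a] z0(1) z by blast
      then show False
      proof
        assume "z0 \<in> Kk z" then have "z0 \<in> Kk p" using K_trans z by blast
        with p show False by blast
      next
        assume h: "z \<in> Kk z0"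
        show False
        proof (cases "z = z0")
          case True then show False using z p by blast
        next
          case False
          have "Rr z0" using K_R[OF a] z0(1) by blast
          then have "ord z < ord z0" using K_R h False by blast
          then show False using z0(2) zZ by force
        qed
      qed
    qed
  qed
  then show ?thesis using p by blast
qed

lemma T_step:
  assumes IH: "\<And>a' b'. ord a' + ord b' < ord a + ord b \<Longrightarrow> Rr a' \<Longrightarrow> Rr b' \<Longrightarrow>
      \<exists>P Q. P \<in> Wk a' \<and> Q \<in> Wk b' \<and> set P \<inter> set Q \<subseteq> Kk a' \<inter> Kk b'"
    and le: "ord a \<le> ord b" and ra: "Rr a" and rb: "Rr b"
  shows "\<exists>P Q. P \<in> Wk a \<and> Q \<in> Wk b \<and> set P \<inter> set Q \<subseteq> Kk a \<inter> Kk b"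
proof (cases "b = v")
  case True
  have "a = v"
  proof (rule ccontr)
    assume av: "a \<noteq> v"
    obtain P where P: "P \<in> Wk a" using ra Rr_def by auto
    then have "v \<in> set P" unfolding Wk_def is_walk_def by auto
    then have "ord v < ord a" using ord_lt[OF P] av by blast
    then show False using le True by simp
  qed
  obtain Q where "Q \<in> Wk b" using rb Rr_def by auto
  then have "v \<in> V" using True unfolding Wk_def is_walk_def by auto
  then have "[v] \<in> Wk v" unfolding Wk_def is_walk_def by auto
  then show ?thesis using True \<open>a = v\<close> K_self by (intro exI[of _ "[v]"]) auto
next
  case False
  obtain p where p: "p \<in> Pr b" "Kk a \<inter> Kk p \<subseteq> {z. \<forall>q\<in>Pr b. z \<in> Kk q}"
    using choice[OF ra pred_ex[OF rb False]] by blast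
  have rp: "Rr p" using p(1) unfolding Pr_def by simp
  have op: "ord p < ord b" using pred_ord[OF p(1)] by simp
  obtain P Q' where PQ: "P \<in> Wk a" "Q' \<in> Wk p" "set P \<inter> set Q' \<subseteq> Kk a \<inter> Kk p"
    using IH[of a p, OF _ ra rp] op by auto
  have Q: "Q' @ [b] \<in> Wk b" using Wk_snoc[OF PQ(2)] p(1) unfolding Pr_def by auto
  have "set P \<inter> set (Q' @ [b]) \<subseteq> Kk a \<inter> Kk b"
  proof
    fix z assume z: "z \<in> set P \<inter> set (Q' @ [b])"
    show "z \<in> Kk a \<inter> Kk b"
    proof (cases "z = b")
      case True
      have "b = a"
      proof (rule ccontr)
        assume "b \<noteq> a"
        then have "ord b < ord a" using ord_lt[OF PQ(1)] z True by blast
        then show False using le by simp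
      qed
      then show ?thesis using True K_self by auto
    next
      case zb: False
      then have "z \<in> Kk a \<inter> Kk p" using z PQ(3) by auto
      then have "z \<in> Kk a" "\<forall>q\<in>Pr b. z \<in> Kk q" using p(2) by auto
      then show ?thesis using K_pred[OF False] by auto
    qed
  qed
  then show ?thesis using PQ Q by blast
qed

lemma T: "Rr a \<Longrightarrow> Rr b \<Longrightarrow> \<exists>P Q. P \<in> Wk a \<and> Q \<in> Wk b \<and> set P \<inter> set Q \<subseteq> Kk a \<inter> Kk b"
proof (induction "ord a + ord b" arbitrary: a b rule: less_induct)
  case less
  have IH: "\<exists>P Q. P \<in> Wk a' \<and> Q \<in> Wk b' \<and> set P \<inter> set Q \<subseteq> Kk a' \<inter> Kk b'"
    if "ord a' + ord b' < ord a + ord b" "Rr a'" "Rr b'" for a' b'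
    using less.hyps[OF that] .
  show ?case
  proof (cases "ord a \<le> ord b")
    case True
    show ?thesis using T_step[OF IH True less.prems] .
  next
    case False
    have IH': "\<exists>P Q. P \<in> Wk a' \<and> Q \<in> Wk b' \<and> set P \<inter> set Q \<subseteq> Kk a' \<inter> Kk b'"
      if "ord a' + ord b' < ord b + ord a" "Rr a'" "Rr b'" for a' b'
      using IH[of a' b'] that by (simp add: add.commute)
    have "\<exists>P Q. P \<in> Wk b \<and> Q \<in> Wk a \<and> set P \<inter> set Q \<subseteq> Kk b \<inter> Kk a"
      using T_step[OF IH', of b a] False less.prems by simp
    then show ?thesis by blast
  qed
qed

end


lemma INF_gt: assumes "finite S" "\<forall>x\<in>S. a < f x" shows "ereal a < (INF x\<in>S. ereal (f x))"
proof (cases "S = {}")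
  case True then show ?thesis by (simp add: top_ereal_def)
next
  case False
  let ?m = "Min (f ` S)"
  have "?m \<in> f ` S" using assms False by (intro Min_in) auto
  then have "a < ?m" using assms by auto
  moreover have "ereal ?m \<le> (INF x\<in>S. ereal (f x))" using assms by (auto intro!: INF_greatest Min_le)
  ultimately show ?thesis using less_le_trans[of "ereal a" "ereal ?m"] by simp
qed

theorem mainTheorem7:
  fixes V :: "'a set" and E :: "('a \<times> 'a) set" and c :: "'a \<times> 'a \<Rightarrow> real"
    and v w :: 'a
  assumes "finite V"
    and "E \<subseteq> V \<times> V"
    and "\<And>C. is_cycle V E C \<Longrightarrow> walk_weight c C > 0"
    and "v \<in> V" and "w \<in> V"
    and "reachable V E v w"
  shows "\<exists>P Q. is_shortest_path V E c v w P \<and> is_shortest_path V E c v w Q \<and>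
           (\<forall>u \<in> set P \<inter> set Q. distance_critical V E c v w u)"
proof -
  interpret pgv V E c v using assms by unfold_locales auto
  interpret D: dagw V Fe v
    using assms Fe_sub Fwalk_distinct by unfold_locales auto
  obtain S where S: "is_path V E v w S" "ww c S = dd w" "dist V E c v w = ereal (dd w)"
    using dd_min[OF assms(6)] by blast
  have "is_walk V Fe S" using shortest_tight[OF S(1,2)] .
  then have "S \<in> D.Wk w" using S(1) unfolding D.Wk_def is_path_def by auto
  then have rw: "D.Rr w" unfolding D.Rr_def by auto
  obtain P Q where PQ: "P \<in> D.Wk w" "Q \<in> D.Wk w" "set P \<inter> set Q \<subseteq> D.Kk w"
    using D.T[OF rw rw] by auto
  have sp: "is_shortest_path V E c v w X" if X: "X \<in> D.Wk w" for X
  proof -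
    have Xw: "is_walk V Fe X" "hd X = v" "last X = w" using X unfolding D.Wk_def by auto
    have "is_walk V E X" using Xw(1) wlk_mono[OF _ Fe_sub] by (auto simp: is_walk_iff)
    moreover have "distinct X" using Fwalk_distinct[OF Xw(1)] .
    moreover have "ww c X = dd w" using telescope[of X] Xw dd_v by (auto simp: is_walk_iff)
    ultimately show ?thesis using Xw S(3) unfolding is_shortest_path_def is_path_def ww_eq by auto
  qed
  have crit: "distance_critical V E c v w u" if u: "u \<in> D.Kk w" for u
  proof (cases "u \<in> {v, w}")
    case True then show ?thesis unfolding distance_critical_def by auto
  next
    case False
    let ?S = "{xs. is_path (V - {u}) E v w xs}"
    have fin: "finite ?S"
      using fin_distinct_lists[OF assms(1), of "\<lambda>xs. is_walk (V - {u}) E xs \<and> hd xs = v \<and> last xs = w"]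
      by (rule finite_subset[rotated]) (auto simp: is_path_def is_walk_def)
    have gt: "\<forall>xs\<in>?S. dd w < ww c xs"
    proof
      fix xs assume "xs \<in> ?S"
      then have xs: "is_path (V - {u}) E v w xs" by simp
      then have xp: "is_path V E v w xs" unfolding is_path_def is_walk_def by auto
      then have ge: "dd w \<le> ww c xs" using walk_ge_dd(1)[of xs] unfolding is_path_def by auto
      have "u \<notin> set xs" using xs unfolding is_path_def is_walk_def by auto
      moreover have "ww c xs = dd w \<Longrightarrow> u \<in> set xs"
      proof -
        assume "ww c xs = dd w"
        then have "is_walk V Fe xs" using shortest_tight[OF xp] by simp
        then have "xs \<in> D.Wk w" using xp unfolding D.Wk_def is_path_def by auto
        then show ?thesis using u unfolding D.Kk_def by auto
      qed
      ultimately show "dd w < ww c xs" using ge by force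
    qed
    have "dist V E c v w < dist (V - {u}) E c v w"
      unfolding S(3) unfolding dist_def ww_eq using INF_gt[OF fin gt] by simp
    then show ?thesis unfolding distance_critical_def by auto
  qed
  show ?thesis using sp[OF PQ(1)] sp[OF PQ(2)] crit PQ(3) by blast
qed

end
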